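(* Let $(X,\mu)$ be a non-atomic probability measure space equipped with a tree $\mathcal{T}$, with associated dyadic maximal operator $\mathcal{M}_{\mathcal{T}}$, and let $0<q<1$. Let $g:(0,1]\to\mathbb{R}^+$ be integrable and non-increasing with $\int_0^1\big(\frac1t\int_0^t g\big)^q dt<+\infty$. Let $\phi_n:X\to\mathbb{R}^+$ be measurable with $\phi_n^*=g$ for all $n$, and suppose $$\lim_n\int_X(\mathcal{M}_{\mathcal{T}}\phi_n)^q\,d\mu=\int_0^1\Big(\frac1t\int_0^t g\Big)^q dt.$$ Then for every $k\in(0,1]$, $$\lim_n\int_0^k\big[(\mathcal{M}_{\mathcal{T}}\phi_n)^*(t)\big]^q dt=\int_0^k\Big(\frac1t\int_0^t g\Big)^q dt.$$
   Context: A set $\mathcal{T}$ of measurable subsets of $X$ is a tree if: (i) $X\in\mathcal{T}$ and $\mu(I)>0$ for every $I\in\mathcal{T}$; (ii) for every $I\in\mathcal{T}$ there is a finite or countable set $C(I)\subseteq\mathcal{T}$ with at least two elements, consisting of pairwise disjoint subsets of $I$ whose union is $I$; (iii) $\mathcal{T}=\bigcup_{m\ge0}\mathcal{T}_{(m)}$ where $\mathcal{T}_{(0)}=\{X\}$ and $\mathcal{T}_{(m+1)}=\bigcup_{I\in\mathcal{T}_{(m)}}C(I)$; (iv) $\lim_{m\to\infty}\sup_{I\in\mathcal{T}_{(m)}}\mu(I)=0$. The dyadic maximal operator is $\mathcal{M}_{\mathcal{T}}\phi(x)=\sup\{\frac{1}{\mu(I)}\int_I|\phi|\,d\mu : x\in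 I\in\mathcal{T}\}$. The decreasing rearrangement of a measurable $\psi$ on $X$ is $\psi^*(t)=\sup_{e\subseteq X,\ \mu(e)=t}\ \inf_{x\in e}|\psi(x)|$ for $0<t\le1$. *)

theory Defs
  imports "HOL-Probability.Probability"
begin

definition nonatomic :: "'a measure \<Rightarrow> bool" where
  "nonatomic M \<longleftrightarrow> (\<forall>A\<in>sets M. measure M A > 0 \<longrightarrow>
     (\<exists>B\<in>sets M. B \<subseteq> A \<and> 0 < measure M B \<and> measure M B < measure M A))"

fun tree_level :: "('a set \<Rightarrow> 'a set set) \<Rightarrow> 'a set \<Rightarrow> nat \<Rightarrow> 'a set set" where
  "tree_level C X 0 = {X}"
| "tree_level C X (Suc m) = (\<Union>I\<in>tree_level C X m. C I)"

definition is_tree :: "'a measure \<Rightarrow> 'a set set \<Rightarrow> bool" where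
  "is_tree M T \<longleftrightarrow> (\<exists>C.
     space M \<in> T \<and> (\<forall>I\<in>T. I \<in> sets M \<and> measure M I > 0)
   \<and> (\<forall>I\<in>T. C I \<subseteq> T \<and> countable (C I) \<and> (\<exists>J1\<in>C I. \<exists>J2\<in>C I. J1 \<noteq> J2)
        \<and> (\<forall>J1\<in>C I. \<forall>J2\<in>C I. J1 \<noteq> J2 \<longrightarrow> J1 \<inter> J2 = {})
        \<and> (\<forall>J\<in>C I. J \<subseteq> I) \<and> \<Union>(C I) = I)
   \<and> T = (\<Union>m. tree_level C (space M) m)
   \<and> (\<lambda>m. SUP I\<in>tree_level C (space M) m. measure M I) \<longlonglongrightarrow> 0)"

definition maxop :: "'a measure \<Rightarrow> 'a set set \<Rightarrow> ('a \<Rightarrow> real) \<Rightarrow> 'a \<Rightarrow> ennreal" where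
  "maxop M T \<phi> x = (SUP I\<in>{I\<in>T. x \<in> I}.
      (set_nn_integral M I (\<lambda>y. ennreal \<bar>\<phi> y\<bar>)) / emeasure M I)"

text \<open>Decreasing rearrangement of a [0,\<infinity>]-valued function (meaningful for 0<t\<le>1).\<close>
definition rearr :: "'a measure \<Rightarrow> ('a \<Rightarrow> ennreal) \<Rightarrow> real \<Rightarrow> ennreal" where
  "rearr M \<psi> t = (SUP e\<in>{e\<in>sets M. measure M e = t}. INF x\<in>e. \<psi> x)"

definition epow :: "real \<Rightarrow> ennreal \<Rightarrow> ennreal" where
  "epow q x = (if x = \<infinity> then \<infinity> else ennreal (enn2real x powr q))"

definition hardy :: "(real \<Rightarrow> real) \<Rightarrow> real \<Rightarrow> real" where
  "hardy g t = (LBINT s:{0<..t}. g s) / t"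

end

theory Submission
  imports Defs
begin

lemma (in prob_space) nonatomic_small_pow:
  assumes na: "nonatomic M" and A: "A \<in> events" "prob A > 0"
  shows "\<exists>B\<in>events. B \<subseteq> A \<and> 0 < prob B \<and> prob B \<le> prob A / 2^n"
proof (induction n)
  case 0 then show ?case using A by auto
next
  case (Suc n)
  then obtain B where B: "B \<in> events" "B \<subseteq> A" "0 < prob B" "prob B \<le> prob A / 2^n" by auto
  then obtain C where C: "C \<in> events" "C \<subseteq> B" "0 < prob C" "prob C < prob B"
    using na unfolding nonatomic_def by blast
  show ?case
  proof (cases "prob C \<le> prob B / 2")
    case True then show ?thesis using B C by (intro bexI[of _ C]) auto
  next
    case False
    have "prob (B - C) = prob B - prob C" using finite_measure_Diff B C by auto
    then show ?thesis using B C False by (intro bexI[of _ "B - C"]) auto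
  qed
qed

lemma (in prob_space) nonatomic_small:
  assumes na: "nonatomic M" and A: "A \<in> events" "prob A > 0" and e: "e > 0"
  shows "\<exists>B\<in>events. B \<subseteq> A \<and> 0 < prob B \<and> prob B \<le> e"
proof -
  obtain n :: nat where n: "prob A / e < n" using reals_Archimedean2 by blast
  have "real n < 2^n" using less_exp[of n] by (metis of_nat_less_iff of_nat_numeral of_nat_power)
  then have "prob A / e < 2^n" using n by linarith
  then have "prob A / 2^n < e" using e by (simp add: field_simps)
  moreover obtain B where "B \<in> events" "B \<subseteq> A" "0 < prob B" "prob B \<le> prob A / 2^n"
    using nonatomic_small_pow[OF na A, of n] by blast
  ultimately show ?thesis by (intro bexI[of _ B]) auto
qed

lemma (in prob_space) nonatomic_exact:
  assumes na: "nonatomic M" and A: "A \<in> events" and t: "0 \<le> t" "t \<le> prob A"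
  shows "\<exists>B\<in>events. B \<subseteq> A \<and> prob B = t"
proof -
  define S where "S B = {prob C | C. C \<in> events \<and> C \<subseteq> A - B \<and> prob C \<le> t - prob B}" for B
  define P where "P B C \<longleftrightarrow> C \<in> events \<and> C \<subseteq> A - B \<and> prob C \<le> t - prob B \<and> Sup (S B) \<le> 2 * prob C" for B C
  define step where "step B = B \<union> (SOME C. P B C)" for B
  define Bs where "Bs n = (step ^^ n) {}" for n
  have Sne: "0 \<in> S B" if "prob B \<le> t" for B
    using that unfolding S_def by (intro CollectI exI[of _ "{}"]) auto
  have Sbdd: "bdd_above (S B)" for B
    unfolding S_def by (intro bdd_aboveI[of _ 1]) auto
  have exP: "\<exists>C. P B C" if hB: "prob B \<le> t" for B
  proof (cases "Sup (S B) \<le> 0")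
    case True then show ?thesis unfolding P_def using hB by (intro exI[of _ "{}"]) auto
  next
    case False
    then have "Sup (S B) / 2 < Sup (S B)" by auto
    then obtain x where "x \<in> S B" "Sup (S B) / 2 < x"
      using less_cSup_iff[OF _ Sbdd] Sne[OF hB] by blast
    then obtain C' where C': "C' \<in> events" "C' \<subseteq> A - B" "prob C' \<le> t - prob B" "x = prob C'"
      unfolding S_def by blast
    show ?thesis unfolding P_def using C' \<open>Sup (S B) / 2 < x\<close> by (intro exI[of _ C']) auto
  qed
  have Pstep: "P B (SOME C. P B C)" if "prob B \<le> t" for B
    using someI_ex[OF exP[OF that]] .
  have inv: "Bs n \<in> events \<and> Bs n \<subseteq> A \<and> prob (Bs n) \<le> t" for n
  proof (induction n)
    case 0 then show ?case using t by (auto simp: Bs_def)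
  next
    case (Suc n)
    let ?C = "SOME C. P (Bs n) C"
    have P: "P (Bs n) ?C" using Pstep Suc by auto
    have eq: "Bs (Suc n) = Bs n \<union> ?C" by (simp add: Bs_def step_def)
    have "prob (Bs n \<union> ?C) = prob (Bs n) + prob ?C"
      using P Suc by (intro finite_measure_Union) (auto simp: P_def)
    then show ?case using P Suc unfolding eq P_def by auto
  qed
  define C where "C n = (SOME C. P (Bs n) C)" for n
  have PC: "P (Bs n) (C n)" for n using Pstep inv unfolding C_def by auto
  have Bs_Suc: "Bs (Suc n) = Bs n \<union> C n" for n by (simp add: Bs_def step_def C_def)
  have probSuc: "prob (Bs (Suc n)) = prob (Bs n) + prob (C n)" for n
    unfolding Bs_Suc using PC[of n] inv[of n] by (intro finite_measure_Union) (auto simp: P_def)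
  have inc: "incseq Bs" unfolding incseq_Suc_iff Bs_Suc by auto
  define B where "B = (\<Union>n. Bs n)"
  have rng: "range Bs \<subseteq> events" using inv by blast
  have lim: "(\<lambda>n. prob (Bs n)) \<longlonglongrightarrow> prob B"
    unfolding B_def using rng inc by (intro finite_Lim_measure_incseq) auto
  have Bev: "B \<in> events" "B \<subseteq> A" unfolding B_def using sets.countable_UN[OF rng] inv by blast+
  have "prob B \<le> t" using lim inv by (intro LIMSEQ_le_const2[OF lim]) auto
  have limC: "(\<lambda>n. prob (C n)) \<longlonglongrightarrow> 0"
  proof -
    have "(\<lambda>n. prob (Bs (Suc n)) - prob (Bs n)) \<longlonglongrightarrow> prob B - prob B"
      by (intro tendsto_diff LIMSEQ_Suc lim)
    moreover have "(\<lambda>n. prob (Bs (Suc n)) - prob (Bs n)) = (\<lambda>n. prob (C n))"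
      by (rule ext) (simp only: probSuc add_diff_cancel_left')
    ultimately show ?thesis by simp
  qed
  have "prob B = t"
  proof (rule ccontr)
    assume "prob B \<noteq> t"
    then have lt: "prob B < t" using \<open>prob B \<le> t\<close> by auto
    have "prob (A - B) = prob A - prob B" using finite_measure_Diff A Bev by auto
    then have "prob (A - B) > 0" using lt t by auto
    then obtain D where D: "D \<in> events" "D \<subseteq> A - B" "0 < prob D" "prob D \<le> t - prob B"
      using nonatomic_small[OF na _ _, of "A - B" "t - prob B"] A Bev lt by auto
    have "prob D \<le> 2 * prob (C n)" for n
    proof -
      have "prob (Bs n) \<le> prob B" using Bev unfolding B_def by (intro finite_measure_mono) auto
      moreover have "D \<subseteq> A - Bs n" using D(2) unfolding B_def by blast
      ultimately have "prob D \<le> t - prob (Bs n)" "D \<subseteq> A - Bs n" using D(4) by linarith+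
      then have "prob D \<in> S (Bs n)" unfolding S_def using D(1) by blast
      then have "prob D \<le> Sup (S (Bs n))" using Sbdd by (intro cSup_upper)
      then show ?thesis using PC[of n] unfolding P_def by auto
    qed
    moreover have "(\<lambda>n. 2 * prob (C n)) \<longlonglongrightarrow> 0" using tendsto_mult_right_zero[OF limC] by simp
    ultimately have "prob D \<le> 0" using LIMSEQ_le_const[of "\<lambda>n. 2 * prob (C n)" 0 "prob D"] by blast
    then show False using D by linarith
  qed
  then show ?thesis using Bev by blast
qed

lemma level_disj:
  assumes hC0: "\<forall>I\<in>T. \<forall>J1\<in>C I. \<forall>J2\<in>C I. J1 \<noteq> J2 \<longrightarrow> J1 \<inter> J2 = {}"
    and hS0: "\<forall>I\<in>T. \<forall>J\<in>C I. J \<subseteq> I"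
    and LT0: "\<forall>m. tree_level C X m \<subseteq> T"
  shows "\<forall>I J. I \<in> tree_level C X m \<longrightarrow> J \<in> tree_level C X m \<longrightarrow> I \<noteq> J \<longrightarrow> I \<inter> J = {}"
proof -
  have hC: "\<And>I J1 J2. I \<in> T \<Longrightarrow> J1 \<in> C I \<Longrightarrow> J2 \<in> C I \<Longrightarrow> J1 \<noteq> J2 \<Longrightarrow> J1 \<inter> J2 = {}" using hC0 by blast
  have hS: "\<And>I J. I \<in> T \<Longrightarrow> J \<in> C I \<Longrightarrow> J \<subseteq> I" using hS0 by blast
  have LT: "\<And>m. tree_level C X m \<subseteq> T" using LT0 by blast
  show ?thesis
  proof (induction m)
    case 0 then show ?case by simp
  next
    case (Suc m)
    show ?case
    proof (intro allI impI)
      fix I J assume prems: "I \<in> tree_level C X (Suc m)" "J \<in> tree_level C X (Suc m)" "I \<noteq> J"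
      from prems obtain I' J' where I': "I' \<in> tree_level C X m" "I \<in> C I'"
        and J': "J' \<in> tree_level C X m" "J \<in> C J'" by auto
      have T: "I' \<in> T" "J' \<in> T" using subsetD[OF LT I'(1)] subsetD[OF LT J'(1)] by auto
      show "I \<inter> J = {}"
      proof (cases "I' = J'")
        case True then show ?thesis using hC[OF T(1) I'(2)] J'(2) prems(3) by auto
      next
        case False
        then have "I' \<inter> J' = {}" using Suc.IH[rule_format, OF I'(1) J'(1)] by blast
        moreover have "I \<subseteq> I'" "J \<subseteq> J'" using hS[OF T(1) I'(2)] hS[OF T(2) J'(2)] by auto
        ultimately show ?thesis by auto
      qed
    qed
  qed
qed

lemma level_anc:
  assumes hS0: "\<forall>I\<in>T. \<forall>J\<in>C I. J \<subseteq> I"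
    and LT0: "\<forall>m. tree_level C X m \<subseteq> T"
  shows "\<forall>J. J \<in> tree_level C X (m + d) \<longrightarrow> (\<exists>K\<in>tree_level C X m. J \<subseteq> K)"
proof -
  have hS: "\<And>I J. I \<in> T \<Longrightarrow> J \<in> C I \<Longrightarrow> J \<subseteq> I" using hS0 by blast
  have LT: "\<And>m. tree_level C X m \<subseteq> T" using LT0 by blast
  show ?thesis
  proof (induction d)
    case 0 then show ?case by auto
  next
    case (Suc d)
    show ?case
    proof (intro allI impI)
      fix J assume "J \<in> tree_level C X (m + Suc d)"
      then obtain I where I: "I \<in> tree_level C X (m + d)" "J \<in> C I" by auto
      have IT: "I \<in> T" using subsetD[OF LT I(1)] .
      have JI: "J \<subseteq> I" using hS[OF IT I(2)] .
      obtain K where K: "K \<in> tree_level C X m" "I \<subseteq> K" using Suc.IH[rule_format, OF I(1)] by blast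
      show "\<exists>K\<in>tree_level C X m. J \<subseteq> K" using K JI by blast
    qed
  qed
qed

lemma level_countable:
  assumes hc0: "\<forall>I\<in>T. countable (C I)"
    and LT0: "\<forall>m. tree_level C X m \<subseteq> T"
  shows "countable (tree_level C X m)"
proof (induction m)
  case 0 then show ?case by simp
next
  case (Suc m)
  then show ?case using hc0 LT0 by (auto intro!: countable_UN)
qed

lemma ennreal_less_div_imp: 
  fixes a b c :: ennreal
  assumes "a < b / c" "c \<noteq> 0" "c \<noteq> top"
  shows "a * c \<le> b"
proof -
  have "a * c \<le> (b / c) * c" using assms(1) by (intro mult_right_mono) auto
  also have "\<dots> = b" using assms by (simp add: ennreal_divide_times less_top[symmetric])
  finally show ?thesis .
qed

lemma indicator_count_space_sum:
  assumes disj: "\<And>I J. I \<in> P \<Longrightarrow> J \<in> P \<Longrightarrow> I \<noteq> J \<Longrightarrow> I \<inter> J = {}"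
  shows "(\<integral>\<^sup>+I. indicator I x \<partial>count_space P) = (indicator (\<Union>P) x :: ennreal)"
proof (cases "x \<in> \<Union>P")
  case True
  then obtain I0 where I0: "I0 \<in> P" "x \<in> I0" by auto
  have "indicator I x = (indicator {I0} I :: ennreal)" if "I \<in> P" for I
  proof (cases "I = I0")
    case True then show ?thesis using I0 by simp
  next
    case False
    then have "x \<notin> I" using disj[OF that I0(1)] I0(2) by blast
    then show ?thesis using False by simp
  qed
  then have "(\<integral>\<^sup>+I. indicator I x \<partial>count_space P) = (\<integral>\<^sup>+I. indicator {I0} I \<partial>count_space P)"
    by (intro nn_integral_cong) auto
  also have "\<dots> = 1" using I0 by (subst nn_integral_indicator) auto
  finally show ?thesis using True by simp
next
  case False
  then have "\<And>I. I \<in> P \<Longrightarrow> indicator I x = (0 :: ennreal)" by (simp add: indicator_def)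
  then have "(\<integral>\<^sup>+I. indicator I x \<partial>count_space P) = (\<integral>\<^sup>+I. 0 \<partial>count_space P)"
    by (intro nn_integral_cong) auto
  then show ?thesis using False by simp
qed

lemma maximal_ineq:
  fixes \<phi> :: "'a \<Rightarrow> real" and lam :: real
  assumes tree: "is_tree M T" and fm: "finite_measure M" and phim: "\<phi> \<in> borel_measurable M"
  defines "E \<equiv> {x\<in>space M. ennreal lam < maxop M T \<phi> x}"
  shows "E \<in> sets M \<and> ennreal lam * emeasure M E \<le> (\<integral>\<^sup>+x. ennreal \<bar>\<phi> x\<bar> * indicator E x \<partial>M)"
proof -
  obtain C where all: "space M \<in> T \<and> (\<forall>I\<in>T. I \<in> sets M \<and> measure M I > 0)
   \<and> (\<forall>I\<in>T. C I \<subseteq> T \<and> countable (C I) \<and> (\<exists>J1\<in>C I. \<exists>J2\<in>C I. J1 \<noteq> J2)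
        \<and> (\<forall>J1\<in>C I. \<forall>J2\<in>C I. J1 \<noteq> J2 \<longrightarrow> J1 \<inter> J2 = {})
        \<and> (\<forall>J\<in>C I. J \<subseteq> I) \<and> \<Union>(C I) = I)
   \<and> T = (\<Union>m. tree_level C (space M) m)
   \<and> (\<lambda>m. SUP I\<in>tree_level C (space M) m. measure M I) \<longlonglongrightarrow> 0"
    using tree unfolding is_tree_def by (elim exE) (rule that)
  have Tm': "\<forall>I\<in>T. I \<in> sets M \<and> measure M I > 0" using all by (elim conjE) assumption
  have hC': "\<forall>I\<in>T. C I \<subseteq> T \<and> countable (C I) \<and> (\<exists>J1\<in>C I. \<exists>J2\<in>C I. J1 \<noteq> J2)
        \<and> (\<forall>J1\<in>C I. \<forall>J2\<in>C I. J1 \<noteq> J2 \<longrightarrow> J1 \<inter> J2 = {})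
        \<and> (\<forall>J\<in>C I. J \<subseteq> I) \<and> \<Union>(C I) = I" using all by (elim conjE) assumption
  have Teq: "T = (\<Union>m. tree_level C (space M) m)" using all by (elim conjE) assumption
  have Tm: "I \<in> sets M \<and> measure M I > 0" if "I\<in>T" for I using bspec[OF Tm' that] .
  have hCI: "C I \<subseteq> T \<and> countable (C I) \<and> (\<exists>J1\<in>C I. \<exists>J2\<in>C I. J1 \<noteq> J2)
        \<and> (\<forall>J1\<in>C I. \<forall>J2\<in>C I. J1 \<noteq> J2 \<longrightarrow> J1 \<inter> J2 = {})
        \<and> (\<forall>J\<in>C I. J \<subseteq> I) \<and> \<Union>(C I) = I" if "I\<in>T" for I using bspec[OF hC' that] .
  have hc0: "\<forall>I\<in>T. countable (C I)"
  proof
    fix I assume "I \<in> T" show "countable (C I)" using hCI[OF \<open>I \<in> T\<close>, THEN conjunct2, THEN conjunct1] .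
  qed
  have hS0: "\<forall>I\<in>T. \<forall>J\<in>C I. J \<subseteq> I"
  proof
    fix I assume "I \<in> T" show "\<forall>J\<in>C I. J \<subseteq> I" using hCI[OF \<open>I \<in> T\<close>, THEN conjunct2, THEN conjunct2, THEN conjunct2, THEN conjunct2, THEN conjunct1] .
  qed
  have hD0: "\<forall>I\<in>T. \<forall>J1\<in>C I. \<forall>J2\<in>C I. J1 \<noteq> J2 \<longrightarrow> J1 \<inter> J2 = {}"
  proof
    fix I assume "I \<in> T" show "\<forall>J1\<in>C I. \<forall>J2\<in>C I. J1 \<noteq> J2 \<longrightarrow> J1 \<inter> J2 = {}" using hCI[OF \<open>I \<in> T\<close>, THEN conjunct2, THEN conjunct2, THEN conjunct2, THEN conjunct1] .
  qed
  interpret finite_measure M by fact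
  let ?L = "tree_level C (space M)"
  have LT0: "\<forall>m. ?L m \<subseteq> T" using Teq by auto
  have LT: "\<And>m. ?L m \<subseteq> T" using Teq by auto
  have disjL: "\<And>m I J. I \<in> ?L m \<Longrightarrow> J \<in> ?L m \<Longrightarrow> I \<noteq> J \<Longrightarrow> I \<inter> J = {}"
    by (rule level_disj[OF hD0 hS0 LT0, rule_format])
  have anc: "\<And>m d J. J \<in> ?L (m + d) \<Longrightarrow> \<exists>K\<in>?L m. J \<subseteq> K"
    by (rule level_anc[OF hS0 LT0, rule_format])
  have cL: "\<And>m. countable (?L m)" by (rule level_countable[OF hc0 LT0])
  have cT: "countable T" unfolding Teq by (intro countable_UN) (simp_all add: cL)
  define avg where "avg I = (\<integral>\<^sup>+y. ennreal \<bar>\<phi> y\<bar> * indicator I y \<partial>M) / emeasure M I" for I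
  define G where "G = {I\<in>T. ennreal lam < avg I}"
  have mx: "maxop M T \<phi> x = (SUP I\<in>{I\<in>T. x \<in> I}. avg I)" for x
    unfolding maxop_def avg_def ..
  have Tsp: "I \<subseteq> space M" if "I \<in> T" for I using sets.sets_into_space Tm[OF that] by blast
  have EG: "E = \<Union>G"
  proof
    show "E \<subseteq> \<Union>G" unfolding E_def G_def mx less_SUP_iff by blast
    show "\<Union>G \<subseteq> E" unfolding E_def G_def mx less_SUP_iff using Tsp by blast
  qed
  define P where "P = {I. \<exists>m. I \<in> ?L m \<and> I \<in> G \<and> (\<forall>m'<m. \<forall>J\<in>?L m'. I \<subseteq> J \<longrightarrow> J \<notin> G)}"
  have PG: "P \<subseteq> G" unfolding P_def by blast
  have GT: "G \<subseteq> T" unfolding G_def by blast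
  have PT: "P \<subseteq> T" using PG GT by (rule subset_trans)
  have cP: "countable P" using countable_subset[OF PT cT] .
  have lt_case: False if I: "I \<in> ?L m1" "I \<in> G" and J: "J \<in> ?L m2" "J \<in> P"
      and JP: "\<forall>m'<m2. \<forall>K\<in>?L m'. J \<subseteq> K \<longrightarrow> K \<notin> G"
      and m: "m1 < m2" and ne: "I \<inter> J \<noteq> {}" for I J m1 m2
  proof -
    have Jl: "J \<in> ?L (m1 + (m2 - m1))" using J m by simp
    obtain K where K: "K \<in> ?L m1" "J \<subseteq> K" using anc[OF Jl] by blast
    have "K \<inter> I \<noteq> {}" using K(2) ne by blast
    then have "K = I" using disjL[OF K(1) I(1)] by blast
    moreover have "K \<notin> G" using JP[rule_format, OF m K(1) K(2)] .
    ultimately show False using I(2) by simp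
  qed
  have Pdisj: "\<And>I J. I \<in> P \<Longrightarrow> J \<in> P \<Longrightarrow> I \<noteq> J \<Longrightarrow> I \<inter> J = {}"
  proof -
    fix I J assume IP: "I \<in> P" and JP: "J \<in> P" and ne: "I \<noteq> J"
    from IP obtain m1 where I: "I \<in> ?L m1" "I \<in> G" "\<forall>m'<m1. \<forall>K\<in>?L m'. I \<subseteq> K \<longrightarrow> K \<notin> G"
      unfolding P_def by blast
    from JP obtain m2 where J: "J \<in> ?L m2" "J \<in> G" "\<forall>m'<m2. \<forall>K\<in>?L m'. J \<subseteq> K \<longrightarrow> K \<notin> G"
      unfolding P_def by blast
    show "I \<inter> J = {}"
    proof (rule ccontr)
      assume nd: "I \<inter> J \<noteq> {}"
      consider "m1 = m2" | "m1 < m2" | "m2 < m1" by linarith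
      then show False
      proof cases
        case 1 then have J1: "J \<in> ?L m1" using J(1) by simp
        show ?thesis using disjL[OF I(1) J1 ne] nd by blast
      next
        case 2 show ?thesis by (rule lt_case[OF I(1,2) J(1) JP J(3) 2 nd])
      next
        case 3 
        have nd': "J \<inter> I \<noteq> {}" using nd by blast
        show ?thesis by (rule lt_case[OF J(1,2) I(1) IP I(3) 3 nd'])
      qed
    qed
  qed
  have PU: "\<Union>P = \<Union>G"
  proof
    show "\<Union>P \<subseteq> \<Union>G" using PG by blast
    show "\<Union>G \<subseteq> \<Union>P"
    proof
      fix x assume "x \<in> \<Union>G"
      then obtain I where "I \<in> G" "x \<in> I" by blast
      then have "I \<in> T" using GT by blast
      then have "I \<in> (\<Union>m. ?L m)" using Teq by simp
      then obtain m where m: "I \<in> ?L m" by blast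
      define Q where "Q m \<longleftrightarrow> (\<exists>J\<in>?L m. x \<in> J \<and> J \<in> G)" for m
      have "Q m" unfolding Q_def using m \<open>I \<in> G\<close> \<open>x \<in> I\<close> by blast
      then have "Q (LEAST m. Q m)" by (rule LeastI)
      then obtain J0 where J0: "J0 \<in> ?L (LEAST m. Q m)" "x \<in> J0" "J0 \<in> G" unfolding Q_def by blast
      have "\<forall>m'<(LEAST m. Q m). \<forall>K\<in>?L m'. J0 \<subseteq> K \<longrightarrow> K \<notin> G"
      proof (intro allI impI ballI notI)
        fix m' K assume "m' < (LEAST m. Q m)" "K \<in> ?L m'" "J0 \<subseteq> K" "K \<in> G"
        then have "Q m'" unfolding Q_def using J0(2) by blast
        then show False using not_less_Least \<open>m' < (LEAST m. Q m)\<close> by blast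
      qed
      then have "J0 \<in> P" unfolding P_def using J0 by blast
      then show "x \<in> \<Union>P" using J0 by blast
    qed
  qed
  have Psets: "P \<subseteq> sets M"
  proof
    fix I assume "I \<in> P"
    then have "I \<in> T" using PG GT by blast
    then show "I \<in> sets M" using Tm[OF \<open>I \<in> T\<close>] by blast
  qed
  have Esets: "E \<in> sets M" unfolding EG PU[symmetric] using cP Psets by (rule sets.countable_Union)
  have "emeasure M E = (\<integral>\<^sup>+I. emeasure M I \<partial>count_space P)"
  proof -
    have "disjoint_family_on id P" unfolding disjoint_family_on_def using Pdisj by simp
    then have "emeasure M (\<Union>(id ` P)) = (\<integral>\<^sup>+I. emeasure M (id I) \<partial>count_space P)"
      using cP Psets by (intro emeasure_UN_countable) auto
    then show ?thesis unfolding EG PU[symmetric] by simp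
  qed
  then have "ennreal lam * emeasure M E = (\<integral>\<^sup>+I. ennreal lam * emeasure M I \<partial>count_space P)"
    by (simp add: nn_integral_cmult)
  also have "\<dots> \<le> (\<integral>\<^sup>+I. (\<integral>\<^sup>+y. ennreal \<bar>\<phi> y\<bar> * indicator I y \<partial>M) \<partial>count_space P)"
  proof (intro nn_integral_mono)
    fix I assume "I \<in> space (count_space P)"
    then have IG: "I \<in> G" "I \<in> T" using PG GT by auto
    have "emeasure M I \<noteq> 0" using Tm[OF IG(2)] by (simp add: emeasure_eq_measure)
    moreover have "emeasure M I \<noteq> top" by simp
    ultimately show "ennreal lam * emeasure M I \<le> (\<integral>\<^sup>+y. ennreal \<bar>\<phi> y\<bar> * indicator I y \<partial>M)"
      using ennreal_less_div_imp[of "ennreal lam"] IG(1) unfolding G_def avg_def by simp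
  qed
  also have "\<dots> = (\<integral>\<^sup>+y. (\<integral>\<^sup>+I. ennreal \<bar>\<phi> y\<bar> * indicator I y \<partial>count_space P) \<partial>M)"
  proof (intro nn_integral_count_space_nn_integral[symmetric] cP)
    fix I assume "I \<in> P"
    then have [measurable]: "I \<in> sets M" using Psets by blast
    note [measurable] = phim
    show "(\<lambda>y. ennreal \<bar>\<phi> y\<bar> * indicator I y) \<in> borel_measurable M" by measurable
  qed
  also have "\<dots> = (\<integral>\<^sup>+y. ennreal \<bar>\<phi> y\<bar> * indicator E y \<partial>M)"
  proof (intro nn_integral_cong)
    fix y
    have "(\<integral>\<^sup>+I. ennreal \<bar>\<phi> y\<bar> * indicator I y \<partial>count_space P) = ennreal \<bar>\<phi> y\<bar> * (\<integral>\<^sup>+I. indicator I y \<partial>count_space P)"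
      by (simp add: nn_integral_cmult)
    also have "\<dots> = ennreal \<bar>\<phi> y\<bar> * indicator E y" 
    proof -
      have "(\<integral>\<^sup>+I. indicator I y \<partial>count_space P) = (indicator (\<Union>P) y :: ennreal)"
        by (rule indicator_count_space_sum) (rule Pdisj)
      then show ?thesis unfolding EG PU by simp
    qed
    finally show "(\<integral>\<^sup>+I. ennreal \<bar>\<phi> y\<bar> * indicator I y \<partial>count_space P) = ennreal \<bar>\<phi> y\<bar> * indicator E y" .
  qed
  finally show ?thesis using Esets by simp
qed


lemma tree_basic:
  assumes tree: "is_tree M T"
  shows "countable T \<and> (\<forall>I\<in>T. I \<in> sets M)"
proof -
  obtain C where all: "space M \<in> T \<and> (\<forall>I\<in>T. I \<in> sets M \<and> measure M I > 0)
   \<and> (\<forall>I\<in>T. C I \<subseteq> T \<and> countable (C I) \<and> (\<exists>J1\<in>C I. \<exists>J2\<in>C I. J1 \<noteq> J2)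
        \<and> (\<forall>J1\<in>C I. \<forall>J2\<in>C I. J1 \<noteq> J2 \<longrightarrow> J1 \<inter> J2 = {})
        \<and> (\<forall>J\<in>C I. J \<subseteq> I) \<and> \<Union>(C I) = I)
   \<and> T = (\<Union>m. tree_level C (space M) m)
   \<and> (\<lambda>m. SUP I\<in>tree_level C (space M) m. measure M I) \<longlonglongrightarrow> 0"
    using tree unfolding is_tree_def by (elim exE) (rule that)
  have Tm': "\<forall>I\<in>T. I \<in> sets M \<and> measure M I > 0" using all by (elim conjE) assumption
  have hC': "\<forall>I\<in>T. C I \<subseteq> T \<and> countable (C I) \<and> (\<exists>J1\<in>C I. \<exists>J2\<in>C I. J1 \<noteq> J2)
        \<and> (\<forall>J1\<in>C I. \<forall>J2\<in>C I. J1 \<noteq> J2 \<longrightarrow> J1 \<inter> J2 = {})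
        \<and> (\<forall>J\<in>C I. J \<subseteq> I) \<and> \<Union>(C I) = I" using all by (elim conjE) assumption
  have Teq: "T = (\<Union>m. tree_level C (space M) m)" using all by (elim conjE) assumption
  have hCI: "C I \<subseteq> T \<and> countable (C I) \<and> (\<exists>J1\<in>C I. \<exists>J2\<in>C I. J1 \<noteq> J2)
        \<and> (\<forall>J1\<in>C I. \<forall>J2\<in>C I. J1 \<noteq> J2 \<longrightarrow> J1 \<inter> J2 = {})
        \<and> (\<forall>J\<in>C I. J \<subseteq> I) \<and> \<Union>(C I) = I" if "I\<in>T" for I using bspec[OF hC' that] .
  have hc0: "\<forall>I\<in>T. countable (C I)"
  proof
    fix I assume "I \<in> T" show "countable (C I)" using hCI[OF \<open>I \<in> T\<close>, THEN conjunct2, THEN conjunct1] .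
  qed
  let ?L = "tree_level C (space M)"
  have LT0: "\<forall>m. ?L m \<subseteq> T" using Teq by auto
  have cL: "\<And>m. countable (?L m)" by (rule level_countable[OF hc0 LT0])
  have cT: "countable T" unfolding Teq by (intro countable_UN) (simp_all add: cL)
  have "\<forall>I\<in>T. I \<in> sets M"
  proof
    fix I assume "I \<in> T" then show "I \<in> sets M" using bspec[OF Tm' \<open>I \<in> T\<close>] by blast
  qed
  then show ?thesis using cT by blast
qed

lemma maxop_measurable:
  assumes tree: "is_tree M T" and phim: "\<phi> \<in> borel_measurable M"
  shows "maxop M T \<phi> \<in> borel_measurable M"
proof -
  have cT: "countable T" and Ts: "\<And>I. I \<in> T \<Longrightarrow> I \<in> sets M" using tree_basic[OF tree] by blast+
  define avg where "avg I = (\<integral>\<^sup>+y. ennreal \<bar>\<phi> y\<bar> * indicator I y \<partial>M) / emeasure M I" for I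
  have mx: "maxop M T \<phi> x = (SUP I\<in>{I\<in>T. x \<in> I}. avg I)" for x
    unfolding maxop_def avg_def ..
  have eq: "maxop M T \<phi> x = (SUP I\<in>T. avg I * indicator I x)" for x
    unfolding mx
  proof (rule antisym)
    show "(SUP I\<in>{I\<in>T. x \<in> I}. avg I) \<le> (SUP I\<in>T. avg I * indicator I x)"
    proof (rule SUP_least)
      fix I assume "I \<in> {I\<in>T. x \<in> I}"
      then have I: "I \<in> T" "x \<in> I" by auto
      show "avg I \<le> (SUP I\<in>T. avg I * indicator I x)"
        by (rule SUP_upper2[OF I(1)]) (simp add: I(2))
    qed
    show "(SUP I\<in>T. avg I * indicator I x) \<le> (SUP I\<in>{I\<in>T. x \<in> I}. avg I)"
    proof (rule SUP_least)
      fix I assume I: "I \<in> T"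
      show "avg I * indicator I x \<le> (SUP I\<in>{I\<in>T. x \<in> I}. avg I)"
      proof (cases "x \<in> I")
        case True
        then have "I \<in> {I\<in>T. x \<in> I}" using I by simp
        then have "avg I \<le> (SUP I\<in>{I\<in>T. x \<in> I}. avg I)" by (rule SUP_upper)
        then show ?thesis using True by simp
      next
        case False then show ?thesis by simp
      qed
    qed
  qed
  have "(\<lambda>x. SUP I\<in>T. avg I * indicator I x) \<in> borel_measurable M"
  proof (rule borel_measurable_SUP[OF cT])
    fix I assume "I \<in> T"
    then have [measurable]: "I \<in> sets M" by (rule Ts)
    show "(\<lambda>x. avg I * indicator I x) \<in> borel_measurable M" by measurable
  qed
  then show ?thesis unfolding eq[abs_def] .
qed

lemma emeasure_lborel_Ici_top: "emeasure lborel {(0::real)..} = top"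
proof (rule ccontr)
  assume "emeasure lborel {(0::real)..} \<noteq> top"
  then obtain n :: nat where n: "emeasure lborel {(0::real)..} < of_nat n"
    using ennreal_Ex_less_of_nat less_top by blast
  have "emeasure lborel {(0::real)..<real n} \<le> emeasure lborel {(0::real)..}"
    by (intro emeasure_mono) auto
  then have "of_nat n \<le> emeasure lborel {(0::real)..}"
    by (simp add: ennreal_of_nat_eq_real_of_nat)
  then show False using n by simp
qed

lemma measure_below_ennreal:
  fixes a :: ennreal
  shows "emeasure lborel {s::real. 0 \<le> s \<and> ennreal s < a} = a"
proof (cases a rule: ennreal_cases)
  case (real r)
  then have "{s::real. 0 \<le> s \<and> ennreal s < a} = {0..<r}"
    by (auto simp: ennreal_less_iff)
  then show ?thesis using real by simp
next
  case top
  then have "{s::real. 0 \<le> s \<and> ennreal s < a} = {0..}" by auto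
  then show ?thesis using top emeasure_lborel_Ici_top by simp
qed

lemma layer_cake:
  fixes G :: "'a \<Rightarrow> ennreal"
  assumes sf: "sigma_finite_measure M" and G[measurable]: "G \<in> borel_measurable M"
  shows "(\<integral>\<^sup>+x. G x \<partial>M) = (\<integral>\<^sup>+s. (if 0 \<le> s then emeasure M {x\<in>space M. ennreal s < G x} else 0) \<partial>lborel)"
proof -
  interpret sigma_finite_measure M by fact
  interpret P: pair_sigma_finite M lborel
    by (intro pair_sigma_finite.intro sf lborel.sigma_finite_measure_axioms)
  define f where "f x s = (if 0 \<le> s \<and> ennreal s < G x then 1 else 0 :: ennreal)" for x s
  have fm: "case_prod f \<in> borel_measurable (M \<Otimes>\<^sub>M lborel)" unfolding f_def by measurable
  have inner: "(\<integral>\<^sup>+s. f x s \<partial>lborel) = G x" for x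
  proof -
    have "(\<integral>\<^sup>+s. f x s \<partial>lborel) = (\<integral>\<^sup>+s. indicator {s::real. 0 \<le> s \<and> ennreal s < G x} s \<partial>lborel)"
      unfolding f_def by (intro nn_integral_cong) (simp add: indicator_def)
    also have "\<dots> = emeasure lborel {s::real. 0 \<le> s \<and> ennreal s < G x}"
      by (intro nn_integral_indicator) measurable
    also have "\<dots> = G x" by (rule measure_below_ennreal)
    finally show ?thesis .
  qed
  have inner2: "(\<integral>\<^sup>+x. f x s \<partial>M) = (if 0 \<le> s then emeasure M {x\<in>space M. ennreal s < G x} else 0)" for s
  proof (cases "0 \<le> s")
    case True
    have "(\<integral>\<^sup>+x. f x s \<partial>M) = (\<integral>\<^sup>+x. indicator {x\<in>space M. ennreal s < G x} x \<partial>M)"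
      unfolding f_def using True by (intro nn_integral_cong) (simp add: indicator_def)
    also have "\<dots> = emeasure M {x\<in>space M. ennreal s < G x}"
      by (intro nn_integral_indicator) measurable
    finally show ?thesis using True by simp
  next
    case False then show ?thesis unfolding f_def by simp
  qed
  have "(\<integral>\<^sup>+x. G x \<partial>M) = (\<integral>\<^sup>+x. (\<integral>\<^sup>+s. f x s \<partial>lborel) \<partial>M)" by (simp add: inner)
  also have "\<dots> = (\<integral>\<^sup>+s. (\<integral>\<^sup>+x. f x s \<partial>M) \<partial>lborel)" using P.Fubini'[OF fm] by simp
  also have "\<dots> = (\<integral>\<^sup>+s. (if 0 \<le> s then emeasure M {x\<in>space M. ennreal s < G x} else 0) \<partial>lborel)"
    by (simp add: inner2)
  finally show ?thesis .
qed

lemma layer_ineq: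
  fixes G :: "'a \<Rightarrow> ennreal" and h :: "real \<Rightarrow> ennreal"
  assumes fm: "finite_measure M" and Gm[measurable]: "G \<in> borel_measurable M" and A[measurable]: "A \<in> sets M"
   and hm[measurable]: "(\<lambda>t. h t * indicator {0<..c} t) \<in> borel_measurable borel"
   and Ac: "emeasure M A \<le> ennreal c" and c0: "0 \<le> c"
   and key: "\<And>s t. 0 \<le> s \<Longrightarrow> 0 < t \<Longrightarrow> t < c \<Longrightarrow> ennreal t < emeasure M {x\<in>A. ennreal s < G x} \<Longrightarrow> ennreal s < h t"
  shows "(\<integral>\<^sup>+x. G x * indicator A x \<partial>M) \<le> (\<integral>\<^sup>+t. h t * indicator {0<..c} t \<partial>lborel)"
proof -
  interpret finite_measure M by fact
  have sfM: "sigma_finite_measure M" by unfold_locales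
  have sfL: "sigma_finite_measure lborel" by (rule lborel.sigma_finite_measure_axioms)
  have L: "(\<integral>\<^sup>+x. G x * indicator A x \<partial>M) = (\<integral>\<^sup>+s. (if 0 \<le> s then emeasure M {x\<in>space M. ennreal s < G x * indicator A x} else 0) \<partial>lborel)"
    by (rule layer_cake[OF sfM]) measurable
  have R: "(\<integral>\<^sup>+t. h t * indicator {0<..c} t \<partial>lborel) = (\<integral>\<^sup>+s. (if 0 \<le> s then emeasure lborel {t\<in>space lborel. ennreal s < h t * indicator {0<..c} t} else 0) \<partial>lborel)"
    by (rule layer_cake[OF sfL]) simp
  show ?thesis unfolding L R
  proof (intro nn_integral_mono)
    fix s :: real
    show "(if 0 \<le> s then emeasure M {x\<in>space M. ennreal s < G x * indicator A x} else 0)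
      \<le> (if 0 \<le> s then emeasure lborel {t\<in>space lborel. ennreal s < h t * indicator {0<..c} t} else 0)"
    proof (cases "0 \<le> s")
      case s: True
      have Asp: "A \<subseteq> space M" using sets.sets_into_space A by blast
      have eqA: "{x\<in>space M. ennreal s < G x * indicator A x} = {x\<in>A. ennreal s < G x}"
        using Asp by (auto simp: indicator_def)
      define m where "m = measure M {x\<in>A. ennreal s < G x}"
      have Sm: "{x\<in>A. ennreal s < G x} \<in> sets M" by measurable
      have em: "emeasure M {x\<in>A. ennreal s < G x} = ennreal m" unfolding m_def by (simp add: emeasure_eq_measure)
      have m0: "0 \<le> m" unfolding m_def by simp
      have "emeasure M {x\<in>A. ennreal s < G x} \<le> emeasure M A" using A by (intro emeasure_mono) auto
      then have "ennreal m \<le> ennreal c" using Ac em by simp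
      then have mc: "m \<le> c" using ennreal_le_iff[OF c0] by simp
      have sub: "{0<..<m} \<subseteq> {t\<in>space lborel. ennreal s < h t * indicator {0<..c} t}"
      proof
        fix t assume t: "t \<in> {0<..<m}"
        then have "ennreal t < ennreal m" using t by (simp add: ennreal_less_iff)
        then have "ennreal s < h t" using key[OF s _ _] t mc em by auto
        then show "t \<in> {t\<in>space lborel. ennreal s < h t * indicator {0<..c} t}" using t mc by auto
      qed
      have "emeasure lborel {0<..<m} \<le> emeasure lborel {t\<in>space lborel. ennreal s < h t * indicator {0<..c} t}"
        by (intro emeasure_mono sub) measurable
      then have "ennreal m \<le> emeasure lborel {t\<in>space lborel. ennreal s < h t * indicator {0<..c} t}"
        using m0 by simp
      then show ?thesis using s eqA em by simp
    qed simp
  qed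
qed

lemma antimono_measurable:
  fixes f :: "real \<Rightarrow> real"
  assumes am: "\<And>s t. 0 < s \<Longrightarrow> s \<le> t \<Longrightarrow> t \<le> 1 \<Longrightarrow> f t \<le> f s"
  shows "(\<lambda>t. ennreal (f t) * indicator {0<..1} t) \<in> borel_measurable borel"
proof -
  have "mono_on {0<..1} (\<lambda>t. - f t)"
    by (intro mono_onI) (use am in auto)
  then have "(\<lambda>t. - f t) \<in> borel_measurable (restrict_space borel {0<..1})"
    by (rule borel_measurable_mono_on_fnc)
  then have "(\<lambda>t. - (- f t)) \<in> borel_measurable (restrict_space borel {0<..1})"
    by (rule borel_measurable_uminus)
  then have "(\<lambda>t. ennreal (f t)) \<in> borel_measurable (restrict_space borel {0<..1})"
    by (intro measurable_compose[OF _ measurable_ennreal]) simp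
  then show ?thesis
    by (subst (asm) borel_measurable_restrict_space_iff_ennreal) auto
qed

context prob_space
begin

lemma rearr_lower_set:
  assumes na: "nonatomic M" and Gm: "G \<in> borel_measurable M" and t: "0 < t"
    and s: "0 \<le> s" and lt: "ennreal t < emeasure M {x\<in>space M. ennreal s < G x}"
  shows "\<exists>a>s. \<exists>e\<in>events. measure M e = t \<and> (\<forall>x\<in>e. ennreal a < G x)"
proof -
  define S where "S n = {x\<in>space M. ennreal (s + 1 / Suc n) < G x}" for n :: nat
  have Sm: "S n \<in> events" for n unfolding S_def using Gm by measurable
  have inc: "incseq S"
  proof (rule incseq_SucI)
    fix n
    have "ennreal (s + 1 / Suc (Suc n)) \<le> ennreal (s + 1 / Suc n)"
      by (intro ennreal_leI add_left_mono) (simp add: frac_le)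
    then show "S n \<subseteq> S (Suc n)" unfolding S_def by (auto intro: le_less_trans)
  qed
  have U: "(\<Union>n. S n) = {x\<in>space M. ennreal s < G x}"
  proof
    show "(\<Union>n. S n) \<subseteq> {x\<in>space M. ennreal s < G x}"
    proof
      fix x assume "x \<in> (\<Union>n. S n)"
      then obtain n where "x \<in> space M" "ennreal (s + 1 / Suc n) < G x" unfolding S_def by blast
      moreover have "ennreal s \<le> ennreal (s + 1 / Suc n)" by (intro ennreal_leI) simp
      ultimately show "x \<in> {x\<in>space M. ennreal s < G x}" by auto
    qed
    show "{x\<in>space M. ennreal s < G x} \<subseteq> (\<Union>n. S n)"
    proof
      fix x assume x: "x \<in> {x\<in>space M. ennreal s < G x}"
      show "x \<in> (\<Union>n. S n)"
      proof (cases "G x" rule: ennreal_cases)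
        case (real r)
        then have "s < r" using x s by (auto simp: ennreal_less_iff)
        then obtain n :: nat where n: "1 / Suc n < r - s"
          using reals_Archimedean[of "r - s"] by (auto simp: inverse_eq_divide)
        then have "s + 1 / Suc n < r" by simp
        then have "ennreal (s + 1 / Suc n) < ennreal r" using s by (subst ennreal_less_iff) auto
        then have "ennreal (s + 1 / Suc n) < G x" using real by simp
        then show ?thesis using x unfolding S_def by blast
      next
        case top
        then show ?thesis using x unfolding S_def by auto
      qed
    qed
  qed
  have "(\<lambda>n. prob (S n)) \<longlonglongrightarrow> prob (\<Union>n. S n)"
    using Sm inc by (intro finite_Lim_measure_incseq) auto
  moreover have "t < prob (\<Union>n. S n)" using lt less_imp_le[OF t] unfolding U by (simp add: emeasure_eq_measure ennreal_less_iff)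
  ultimately have "eventually (\<lambda>n. t < prob (S n)) sequentially"
    by (rule order_tendstoD)
  then obtain n where n: "t < prob (S n)" by (auto simp: eventually_sequentially)
  then obtain e where e: "e \<in> events" "e \<subseteq> S n" "prob e = t"
    using nonatomic_exact[OF na Sm[of n], of t] t by auto
  have "s < s + 1 / Suc n" by simp
  moreover have "\<forall>x\<in>e. ennreal (s + 1 / Suc n) < G x" using e(2) unfolding S_def by blast
  ultimately show ?thesis using e by blast
qed

lemma rearr_ge_INF:
  assumes "e \<in> events" "measure M e = t"
  shows "(INF x\<in>e. G x) \<le> rearr M G t"
  unfolding rearr_def using assms by (intro SUP_upper) auto

lemma rearr_lower:
  assumes na: "nonatomic M" and Gm: "G \<in> borel_measurable M" and t: "0 < t"
    and s: "0 \<le> s" and lt: "ennreal t < emeasure M {x\<in>space M. ennreal s < G x}"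
  shows "ennreal s < rearr M G t"
proof -
  obtain a e where a: "s < a" and e: "e \<in> events" "measure M e = t" "\<forall>x\<in>e. ennreal a < G x"
    using rearr_lower_set[OF assms] by blast
  have "ennreal s < ennreal a" using a s by (simp add: ennreal_less_iff)
  also have "ennreal a \<le> (INF x\<in>e. G x)" using e(3) by (intro INF_greatest) (simp add: less_imp_le)
  also have "\<dots> \<le> rearr M G t" by (rule rearr_ge_INF[OF e(1,2)])
  finally show ?thesis .
qed

lemma rearr_antimono:
  assumes na: "nonatomic M" and t: "0 \<le> t" "t \<le> t'"
  shows "rearr M G t' \<le> rearr M G t"
  unfolding rearr_def
proof (intro SUP_least)
  fix e assume "e \<in> {e \<in> events. measure M e = t'}"
  then have e: "e \<in> events" "prob e = t'" by auto
  obtain e' where e': "e' \<in> events" "e' \<subseteq> e" "prob e' = t"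
    using nonatomic_exact[OF na e(1), of t] t e(2) by auto
  have "(INF x\<in>e. G x) \<le> (INF x\<in>e'. G x)" using e'(2) by (rule INF_superset_mono) simp
  also have "\<dots> \<le> (SUP e\<in>{e \<in> events. measure M e = t}. INF x\<in>e. G x)"
    using e' by (intro SUP_upper) auto
  finally show "(INF x\<in>e. G x) \<le> (SUP e\<in>{e \<in> events. measure M e = t}. INF x\<in>e. G x)" .
qed

lemma rearr_upper:
  assumes "ennreal c < rearr M F t"
  shows "\<exists>e\<in>events. measure M e = t \<and> (\<forall>x\<in>e. ennreal c < F x)"
proof -
  have "\<exists>e\<in>{e \<in> sets M. measure M e = t}. ennreal c < (INF x\<in>e. F x)"
    using assms unfolding rearr_def less_SUP_iff .
  then obtain e where e0: "e \<in> {e \<in> sets M. measure M e = t}" and ec: "ennreal c < (INF x\<in>e. F x)" by (rule bexE)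
  have "\<forall>x\<in>e. ennreal c < F x"
  proof
    fix x assume "x \<in> e" then show "ennreal c < F x" using less_INF_D[OF ec] by blast
  qed
  then show ?thesis using e0 by blast
qed

end

locale gset =
  fixes g :: "real \<Rightarrow> real"
  assumes g0: "\<And>t. t \<in> {0<..1} \<Longrightarrow> g t \<ge> 0"
    and gi: "set_integrable lborel {0<..1} g"
    and gm: "\<And>s t. 0 < s \<Longrightarrow> s \<le> t \<Longrightarrow> t \<le> 1 \<Longrightarrow> g t \<le> g s"
begin

lemma gi_sub: "a \<ge> 0 \<Longrightarrow> b \<le> 1 \<Longrightarrow> set_integrable lborel {a<..b} g"
  by (rule set_integrable_subset[OF gi]) auto

lemma g_meas:
  assumes "c \<le> 1"
  shows "(\<lambda>t. ennreal (g t) * indicator {0<..c} t) \<in> borel_measurable borel"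
proof -
  have "(\<lambda>x. indicator {0<..1} x *\<^sub>R g x) \<in> borel_measurable lborel"
    using gi unfolding set_integrable_def by (rule borel_measurable_integrable)
  then have m: "(\<lambda>x. indicator {0<..1} x *\<^sub>R g x) \<in> borel_measurable borel" by simp
  have "(\<lambda>t. ennreal (indicator {0<..1} t *\<^sub>R g t) * indicator {0<..c} t) \<in> borel_measurable borel"
    using m by measurable
  moreover have "(\<lambda>t. ennreal (indicator {0<..1} t *\<^sub>R g t) * indicator {0<..c} t) = (\<lambda>t. ennreal (g t) * indicator {0<..c} t)"
    using assms by (auto simp: indicator_def fun_eq_iff)
  ultimately show ?thesis by simp
qed

lemma hardy_eq:
  assumes c: "0 < c" "c \<le> 1"
  shows "(\<integral>\<^sup>+t. ennreal (g t) * indicator {0<..c} t \<partial>lborel) = ennreal (c * hardy g c)"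
proof -
  have si: "set_integrable lborel {0<..c} g" using gi_sub c by auto
  have "(\<integral>\<^sup>+t. ennreal (g t) * indicator {0<..c} t \<partial>lborel) = (\<integral>\<^sup>+t. ennreal (indicator {0<..c} t *\<^sub>R g t) \<partial>lborel)"
    by (intro nn_integral_cong) (simp add: indicator_def)
  also have "\<dots> = ennreal (LBINT t:{0<..c}. g t)"
    unfolding set_lebesgue_integral_def
    using si c g0 unfolding set_integrable_def
    by (intro nn_integral_eq_integral) (auto simp: indicator_def)
  also have "(LBINT t:{0<..c}. g t) = c * hardy g c" unfolding hardy_def using c by simp
  finally show ?thesis .
qed

lemma hardy_nonneg:
  assumes c: "0 < c" "c \<le> 1"
  shows "0 \<le> hardy g c"
proof -
  have "0 \<le> (LBINT t:{0<..c}. g t)"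
    unfolding set_lebesgue_integral_def using c g0 by (intro integral_nonneg_AE AE_I2) (auto simp: indicator_def)
  then show ?thesis unfolding hardy_def using c by simp
qed

lemma hardy_antimono:
  assumes ts: "0 < t" "t \<le> s" "s \<le> 1"
  shows "hardy g s \<le> hardy g t"
proof -
  define I where "I x = (LBINT u:{0<..x}. g u)" for x
  have i1: "set_integrable lborel {0<..t} g" using gi_sub ts by auto
  have i2: "set_integrable lborel {t<..s} g" using gi_sub ts by auto
  have split: "I s = I t + (LBINT u:{t<..s}. g u)"
  proof -
    have "{0<..s} = {0<..t} \<union> {t<..s}" using ts by auto
    then have "I s = (LBINT u:({0<..t} \<union> {t<..s}). g u)" unfolding I_def by simp
    also have "\<dots> = I t + (LBINT u:{t<..s}. g u)"
      unfolding I_def by (rule set_integral_Un[OF _ i1 i2]) auto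
    finally show ?thesis .
  qed
  have fin1: "emeasure lborel {t<..s} \<noteq> \<infinity>" using ts by simp
  have fin2: "emeasure lborel {0<..t} \<noteq> \<infinity>" using ts by simp
  have up: "(LBINT u:{t<..s}. g u) \<le> (s - t) * g t"
  proof -
    have "(LBINT u:{t<..s}. g u) \<le> (LBINT u:{t<..s}. g t)"
    proof (rule set_integral_mono[OF i2])
      show "set_integrable lborel {t<..s} (\<lambda>u. g t)"
        unfolding set_integrable_def using fin1 by (intro integrable_indicator) (auto simp: less_top)
      show "\<And>x. x \<in> {t<..s} \<Longrightarrow> g x \<le> g t" using gm ts by auto
    qed
    also have "\<dots> = (s - t) * g t" using set_integral_const[of "{t<..s}" lborel "g t"] fin1 ts by simp
    finally show ?thesis .
  qed
  have low: "t * g t \<le> I t"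
  proof -
    have "(LBINT u:{0<..t}. g t) \<le> (LBINT u:{0<..t}. g u)"
    proof (rule set_integral_mono[OF _ i1])
      show "set_integrable lborel {0<..t} (\<lambda>u. g t)"
        unfolding set_integrable_def using fin2 by (intro integrable_indicator) (auto simp: less_top)
      show "\<And>x. x \<in> {0<..t} \<Longrightarrow> g t \<le> g x" using gm ts by auto
    qed
    moreover have "(LBINT u:{0<..t}. g t) = t * g t" using set_integral_const[of "{0<..t}" lborel "g t"] fin2 ts by simp
    ultimately show ?thesis unfolding I_def by simp
  qed
  have gt0: "0 \<le> g t" using g0 ts by auto
  have "t * I s = t * I t + t * (LBINT u:{t<..s}. g u)" unfolding split by (simp add: algebra_simps)
  also have "\<dots> \<le> t * I t + t * ((s - t) * g t)" using up ts by (intro add_left_mono mult_left_mono) auto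
  also have "\<dots> = t * I t + (s - t) * (t * g t)" by (simp add: algebra_simps)
  also have "\<dots> \<le> t * I t + (s - t) * I t" using low ts by (intro add_left_mono mult_left_mono) auto
  also have "\<dots> = s * I t" by (simp add: algebra_simps)
  finally have "t * I s \<le> s * I t" .
  then have "I s / s \<le> I t / t" using ts by (simp add: field_simps)
  then show ?thesis unfolding hardy_def I_def .
qed

end

lemma epow_mono:
  assumes q: "0 < q" and xy: "x \<le> y"
  shows "epow q x \<le> epow q y"
proof (cases "y = top")
  case True then show ?thesis by (simp add: epow_def)
next
  case False
  then have "x \<noteq> top" using xy top_unique by auto
  moreover have "enn2real x \<le> enn2real y" using xy False by (intro enn2real_mono) (auto simp: less_top)
  ultimately show ?thesis using False q unfolding epow_def
    by (auto intro!: ennreal_leI powr_mono2)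
qed

lemma epow_ennreal: "0 \<le> r \<Longrightarrow> epow q (ennreal r) = ennreal (r powr q)"
  by (simp add: epow_def)

lemma epow_measurable:
  assumes [measurable]: "f \<in> borel_measurable M"
  shows "(\<lambda>x. epow q (f x)) \<in> borel_measurable M"
  unfolding epow_def by measurable

lemma epow_inv:
  assumes q: "0 < q" and a: "0 \<le> a" and lt: "ennreal a < epow q y"
  shows "ennreal (a powr (1/q)) \<le> y"
proof (cases y rule: ennreal_cases)
  case top then show ?thesis by simp
next
  case (real r)
  then have "ennreal a < ennreal (r powr q)" using lt by (simp add: epow_def)
  then have "a < r powr q" using a by (simp add: ennreal_less_iff)
  then have "a powr (1/q) \<le> (r powr q) powr (1/q)" using a q by (intro powr_mono2) auto
  also have "\<dots> = r" using real q by (simp add: powr_powr)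
  finally show ?thesis using real by (simp add: ennreal_leI)
qed

lemma split_int:
  fixes f :: "real \<Rightarrow> ennreal"
  assumes fm: "(\<lambda>t. f t * indicator {0<..1} t) \<in> borel_measurable borel" and k: "0 < k" "k \<le> 1"
  shows "(\<integral>\<^sup>+t. f t * indicator {0<..1} t \<partial>lborel) =
    (\<integral>\<^sup>+t. f t * indicator {0<..k} t \<partial>lborel) + (\<integral>\<^sup>+t. f t * indicator {k<..1} t \<partial>lborel)"
proof -
  have e1: "(\<lambda>t. f t * indicator {0<..k} t) = (\<lambda>t. (f t * indicator {0<..1} t) * indicator {0<..k} t)"
    using k by (auto simp: fun_eq_iff indicator_def)
  have e2: "(\<lambda>t. f t * indicator {k<..1} t) = (\<lambda>t. (f t * indicator {0<..1} t) * indicator {k<..1} t)"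
    using k by (auto simp: fun_eq_iff indicator_def)
  have m1: "(\<lambda>t. f t * indicator {0<..k} t) \<in> borel_measurable lborel" unfolding e1 using fm by measurable
  have m2: "(\<lambda>t. f t * indicator {k<..1} t) \<in> borel_measurable lborel" unfolding e2 using fm by measurable
  have "(\<integral>\<^sup>+t. f t * indicator {0<..k} t \<partial>lborel) + (\<integral>\<^sup>+t. f t * indicator {k<..1} t \<partial>lborel)
     = (\<integral>\<^sup>+t. f t * indicator {0<..k} t + f t * indicator {k<..1} t \<partial>lborel)"
    using m1 m2 by (rule nn_integral_add[symmetric])
  also have "\<dots> = (\<integral>\<^sup>+t. f t * indicator {0<..1} t \<partial>lborel)"
    using k by (intro nn_integral_cong) (auto simp: indicator_def)
  finally show ?thesis by simp
qed

lemma rearr_cong: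
  assumes "\<And>x. x \<in> space M \<Longrightarrow> f x = f' x"
  shows "rearr M f t = rearr M f' t"
  unfolding rearr_def
proof (intro SUP_cong refl INF_cong)
  fix e x assume "e \<in> {e \<in> sets M. measure M e = t}" "x \<in> e"
  then have "x \<in> space M" using sets.sets_into_space by blast
  then show "f x = f' x" by (rule assms)
qed

theorem lemma6p2:
  fixes M :: "'a measure" and T :: "'a set set" and q :: real
    and g :: "real \<Rightarrow> real" and \<phi> :: "nat \<Rightarrow> 'a \<Rightarrow> real"
  assumes "prob_space M" and "nonatomic M" and "is_tree M T"
    and "0 < q" and "q < 1"
    and "\<And>t. t \<in> {0<..1} \<Longrightarrow> g t \<ge> 0"
    and "set_integrable lborel {0<..1} g"
    and "\<And>s t. 0 < s \<Longrightarrow> s \<le> t \<Longrightarrow> t \<le> 1 \<Longrightarrow> g t \<le> g s"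
    and "(\<integral>\<^sup>+ t\<in>{0<..1}. ennreal (hardy g t powr q) \<partial>lborel) < \<infinity>"
    and "\<And>n. \<phi> n \<in> borel_measurable M"
    and "\<And>n x. x \<in> space M \<Longrightarrow> \<phi> n x \<ge> 0"
    and "\<And>n t. t \<in> {0<..1} \<Longrightarrow> rearr M (\<lambda>x. ennreal (\<phi> n x)) t = ennreal (g t)"
    and "(\<lambda>n. \<integral>\<^sup>+ x. epow q (maxop M T (\<phi> n) x) \<partial>M)
           \<longlonglongrightarrow> (\<integral>\<^sup>+ t\<in>{0<..1}. ennreal (hardy g t powr q) \<partial>lborel)"
  shows "\<forall>k\<in>{0<..1}.
     (\<lambda>n. \<integral>\<^sup>+ t\<in>{0<..k}. epow q (rearr M (maxop M T (\<phi> n)) t) \<partial>lborel)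
       \<longlonglongrightarrow> (\<integral>\<^sup>+ t\<in>{0<..k}. ennreal (hardy g t powr q) \<partial>lborel)"
proof -
  interpret prob_space M by fact
  interpret gset g using assms(6,7,8) by unfold_locales
  have na: "nonatomic M" and tree: "is_tree M T" and q: "0 < q" by fact+
  have phim[measurable]: "\<And>n. \<phi> n \<in> borel_measurable M" by fact
  define F where "F n = maxop M T (\<phi> n)" for n
  have Fm[measurable]: "F n \<in> borel_measurable M" for n
    unfolding F_def by (rule maxop_measurable[OF tree phim])
  have rg: "rearr M (\<lambda>x. ennreal \<bar>\<phi> n x\<bar>) t = ennreal (g t)" if "t \<in> {0<..1}" for n t
  proof -
    have "rearr M (\<lambda>x. ennreal \<bar>\<phi> n x\<bar>) t = rearr M (\<lambda>x. ennreal (\<phi> n x)) t"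
      by (rule rearr_cong) (simp add: assms(11))
    also have "\<dots> = ennreal (g t)" using assms(12) that by blast
    finally show ?thesis .
  qed
  have S1: "rearr M (F n) t \<le> ennreal (hardy g t)" if t: "0 < t" "t \<le> 1" for n t
  proof (rule ccontr)
    assume "\<not> rearr M (F n) t \<le> ennreal (hardy g t)"
    then have lt: "ennreal (hardy g t) < rearr M (F n) t" by simp
    obtain z where z: "ennreal (hardy g t) < z" "z < rearr M (F n) t" using dense[OF lt] by blast
    have "z < top" using order_less_le_trans[OF z(2) top_greatest] .
    then obtain lam where lam: "z = ennreal lam" "0 \<le> lam" by (cases z rule: ennreal_cases) auto
    have h0: "0 \<le> hardy g t" using hardy_nonneg t by blast
    have hl: "hardy g t < lam" using z(1) lam h0 by (simp add: ennreal_less_iff)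
    obtain e where e: "e \<in> events" "measure M e = t" "\<forall>x\<in>e. ennreal lam < F n x"
      using rearr_upper[of lam "F n" t] z(2) lam(1) by blast
    define E where "E = {x\<in>space M. ennreal lam < maxop M T (\<phi> n) x}"
    have mi: "E \<in> sets M \<and> ennreal lam * emeasure M E \<le> (\<integral>\<^sup>+x. ennreal \<bar>\<phi> n x\<bar> * indicator E x \<partial>M)"
      unfolding E_def by (rule maximal_ineq[OF tree finite_measure_axioms phim])
    have Es: "E \<in> sets M" using mi by blast
    have eE: "e \<subseteq> E"
    proof
      fix x assume "x \<in> e"
      then have "x \<in> space M" using e(1) sets.sets_into_space by blast
      then show "x \<in> E" using e(3) \<open>x \<in> e\<close> unfolding E_def F_def by blast
    qed
    define c where "c = measure M E"
    have tc: "t \<le> c" unfolding c_def using e(2) finite_measure_mono[OF eE Es] by simp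
    have c1: "c \<le> 1" unfolding c_def by simp
    have c0: "0 < c" using tc t by simp
    have "(\<integral>\<^sup>+x. ennreal \<bar>\<phi> n x\<bar> * indicator E x \<partial>M) \<le> (\<integral>\<^sup>+t'. ennreal (g t') * indicator {0<..c} t' \<partial>lborel)"
    proof (rule layer_ineq[OF finite_measure_axioms])
      show "(\<lambda>x. ennreal \<bar>\<phi> n x\<bar>) \<in> borel_measurable M" by measurable
      show "E \<in> sets M" by (rule Es)
      show "(\<lambda>t. ennreal (g t) * indicator {0<..c} t) \<in> borel_measurable borel" by (rule g_meas[OF c1])
      show "emeasure M E \<le> ennreal c" unfolding c_def by (simp add: emeasure_eq_measure)
      show "0 \<le> c" using c0 by simp
      fix s t' assume s: "0 \<le> s" and t': "0 < t'" "t' < c"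
        and lt': "ennreal t' < emeasure M {x\<in>E. ennreal s < ennreal \<bar>\<phi> n x\<bar>}"
      have "{x\<in>E. ennreal s < ennreal \<bar>\<phi> n x\<bar>} \<subseteq> {x\<in>space M. ennreal s < ennreal \<bar>\<phi> n x\<bar>}"
        unfolding E_def by blast
      moreover have "{x\<in>space M. ennreal s < ennreal \<bar>\<phi> n x\<bar>} \<in> sets M" by measurable
      ultimately have "emeasure M {x\<in>E. ennreal s < ennreal \<bar>\<phi> n x\<bar>} \<le> emeasure M {x\<in>space M. ennreal s < ennreal \<bar>\<phi> n x\<bar>}"
        by (rule emeasure_mono)
      then have "ennreal t' < emeasure M {x\<in>space M. ennreal s < ennreal \<bar>\<phi> n x\<bar>}" using lt' by simp
      then have "ennreal s < rearr M (\<lambda>x. ennreal \<bar>\<phi> n x\<bar>) t'"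
        by (intro rearr_lower[OF na _ t'(1) s]) measurable
      also have "\<dots> = ennreal (g t')" using rg t' c1 by simp
      finally show "ennreal s < ennreal (g t')" .
    qed
    also have "\<dots> = ennreal (c * hardy g c)" using hardy_eq c0 c1 by blast
    finally have fin: "(\<integral>\<^sup>+x. ennreal \<bar>\<phi> n x\<bar> * indicator E x \<partial>M) \<le> ennreal (c * hardy g c)" .
    have "ennreal lam * emeasure M E \<le> (\<integral>\<^sup>+x. ennreal \<bar>\<phi> n x\<bar> * indicator E x \<partial>M)" using mi by blast
    then have "ennreal lam * ennreal c \<le> (\<integral>\<^sup>+x. ennreal \<bar>\<phi> n x\<bar> * indicator E x \<partial>M)"
      unfolding c_def by (simp add: emeasure_eq_measure)
    then have "ennreal lam * ennreal c \<le> ennreal (c * hardy g c)" using fin by (rule order_trans)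
    then have "ennreal (lam * c) \<le> ennreal (c * hardy g c)" using lam(2) c0 by (simp add: ennreal_mult)
    moreover have "0 \<le> c * hardy g c" using hardy_nonneg c0 c1 by simp
    ultimately have "lam * c \<le> c * hardy g c" by (simp add: ennreal_le_iff)
    then have "lam \<le> hardy g c" using c0 by (simp add: mult.commute)
    also have "hardy g c \<le> hardy g t" using t tc c1 by (intro hardy_antimono) auto
    finally show False using hl by simp
  qed
  define h where "h n t = epow q (rearr M (F n) t)" for n t
  define H where "H t = ennreal (hardy g t powr q)" for t
  have hH: "h n t \<le> H t" if "0 < t" "t \<le> 1" for n t
  proof -
    have "h n t \<le> epow q (ennreal (hardy g t))" unfolding h_def by (intro epow_mono q S1 that)
    also have "\<dots> = H t" unfolding H_def using hardy_nonneg that by (simp add: epow_ennreal)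
    finally show ?thesis .
  qed
  have hfin: "h n t < top" if "0 < t" "t \<le> 1" for n t
    using hH[OF that, of n] unfolding H_def by (simp add: le_less_trans)
  have hmeas: "(\<lambda>t. h n t * indicator {0<..1} t) \<in> borel_measurable borel" for n
  proof -
    have "(\<lambda>t. ennreal (enn2real (h n t)) * indicator {0<..1} t) \<in> borel_measurable borel"
    proof (rule antimono_measurable)
      fix s t :: real assume st: "0 < s" "s \<le> t" "t \<le> 1"
      have "rearr M (F n) t \<le> rearr M (F n) s" using st by (intro rearr_antimono[OF na]) auto
      then have "h n t \<le> h n s" unfolding h_def by (rule epow_mono[OF q])
      then show "enn2real (h n t) \<le> enn2real (h n s)" using hfin[of s n] st by (intro enn2real_mono) auto
    qed
    moreover have "(\<lambda>t. ennreal (enn2real (h n t)) * indicator {0<..1} t) = (\<lambda>t. h n t * indicator {0<..1} t)"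
    proof
      fix t show "ennreal (enn2real (h n t)) * indicator {0<..1} t = h n t * indicator {0<..1} t"
        using hfin[of t n] by (cases "t \<in> {0<..1}") (auto simp: ennreal_enn2real less_top)
    qed
    ultimately show ?thesis by simp
  qed
  have Hmeas: "(\<lambda>t. H t * indicator {0<..1} t) \<in> borel_measurable borel"
    unfolding H_def
  proof (rule antimono_measurable)
    fix s t :: real assume st: "0 < s" "s \<le> t" "t \<le> 1"
    have "hardy g t \<le> hardy g s" using st by (intro hardy_antimono) auto
    moreover have "0 \<le> hardy g t" using st by (intro hardy_nonneg) auto
    ultimately show "hardy g t powr q \<le> hardy g s powr q" using q by (intro powr_mono2) auto
  qed
  have S2: "(\<integral>\<^sup>+x. epow q (F n x) \<partial>M) \<le> (\<integral>\<^sup>+t. h n t * indicator {0<..1} t \<partial>lborel)" for n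
  proof -
    have "(\<integral>\<^sup>+x. epow q (F n x) \<partial>M) = (\<integral>\<^sup>+x. epow q (F n x) * indicator (space M) x \<partial>M)"
      by (intro nn_integral_cong) simp
    also have "\<dots> \<le> (\<integral>\<^sup>+t. h n t * indicator {0<..1} t \<partial>lborel)"
    proof (rule layer_ineq[OF finite_measure_axioms])
      show "(\<lambda>x. epow q (F n x)) \<in> borel_measurable M" by (rule epow_measurable[OF Fm])
      show "space M \<in> sets M" by simp
      show "(\<lambda>t. h n t * indicator {0<..1} t) \<in> borel_measurable borel" by (rule hmeas)
      show "emeasure M (space M) \<le> ennreal 1" by (simp add: emeasure_space_1)
      show "0 \<le> (1::real)" by simp
      fix s t assume s: "0 \<le> s" and t: "0 < t" "t < 1"
        and lt: "ennreal t < emeasure M {x\<in>space M. ennreal s < epow q (F n x)}"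
      obtain a e where a: "s < a" and e: "e \<in> events" "measure M e = t" "\<forall>x\<in>e. ennreal a < epow q (F n x)"
        using rearr_lower_set[OF na epow_measurable[OF Fm] t(1) s lt] by blast
      have a0: "0 \<le> a" using a s by simp
      have "ennreal (a powr (1/q)) \<le> (INF x\<in>e. F n x)"
      proof (rule INF_greatest)
        fix x assume "x \<in> e"
        then show "ennreal (a powr (1/q)) \<le> F n x" using epow_inv[OF q a0] e(3) by blast
      qed
      also have "\<dots> \<le> rearr M (F n) t" by (rule rearr_ge_INF[OF e(1,2)])
      finally have "epow q (ennreal (a powr (1/q))) \<le> h n t" unfolding h_def by (rule epow_mono[OF q])
      moreover have "epow q (ennreal (a powr (1/q))) = ennreal a"
        using a0 q by (simp add: epow_ennreal powr_powr)
      moreover have "ennreal s < ennreal a" using a s by (simp add: ennreal_less_iff)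
      ultimately show "ennreal s < h n t" by simp
    qed
    finally show ?thesis .
  qed
  show ?thesis
  proof
    fix k :: real assume "k \<in> {0<..1}"
    then have k: "0 < k" "k \<le> 1" by auto
    define A where "A n = (\<integral>\<^sup>+t. h n t * indicator {0<..k} t \<partial>lborel)" for n
    define B where "B n = (\<integral>\<^sup>+t. h n t * indicator {k<..1} t \<partial>lborel)" for n
    define a where "a = (\<integral>\<^sup>+t. H t * indicator {0<..k} t \<partial>lborel)"
    define b where "b = (\<integral>\<^sup>+t. H t * indicator {k<..1} t \<partial>lborel)"
    define P where "P n = (\<integral>\<^sup>+x. epow q (F n x) \<partial>M)" for n
    have ab: "(\<integral>\<^sup>+t. H t * indicator {0<..1} t \<partial>lborel) = a + b"
      unfolding a_def b_def by (rule split_int[OF Hmeas k])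
    have AB: "(\<integral>\<^sup>+t. h n t * indicator {0<..1} t \<partial>lborel) = A n + B n" for n
      unfolding A_def B_def by (rule split_int[OF hmeas k])
    have abfin: "a + b < top" using assms(9) ab unfolding H_def by simp
    then have afin: "a \<noteq> top" and bfin: "b \<noteq> top" by (auto simp: less_top)
    have Aa: "A n \<le> a" for n
      unfolding A_def a_def using k hH by (intro nn_integral_mono) (auto simp: indicator_def intro!: mult_right_mono)
    have Bb: "B n \<le> b" for n
      unfolding B_def b_def using k hH by (intro nn_integral_mono) (auto simp: indicator_def intro!: mult_right_mono)
    have PAB: "P n \<le> A n + B n" for n unfolding P_def AB[symmetric] by (rule S2)
    have Plim: "P \<longlonglongrightarrow> a + b"
      using assms(13) unfolding P_def F_def ab[symmetric] H_def by simp
    have low: "P n - b \<le> A n" for n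
    proof -
      have "P n \<le> b + A n" using PAB[of n] Bb[of n] by (metis add.commute add_left_mono order_trans)
      then show ?thesis using bfin by (simp add: ennreal_minus_le_iff)
    qed
    have "(\<lambda>n. P n - b) \<longlonglongrightarrow> (a + b) - b"
      using abfin bfin by (intro tendsto_diff_ennreal Plim tendsto_const) (auto simp: less_top)
    then have L: "(\<lambda>n. P n - b) \<longlonglongrightarrow> a" using bfin by simp
    have "A \<longlonglongrightarrow> a"
      by (rule tendsto_sandwich[OF always_eventually always_eventually L tendsto_const]) (use low Aa in auto)
    then show "(\<lambda>n. \<integral>\<^sup>+ t\<in>{0<..k}. epow q (rearr M (maxop M T (\<phi> n)) t) \<partial>lborel)
       \<longlonglongrightarrow> (\<integral>\<^sup>+ t\<in>{0<..k}. ennreal (hardy g t powr q) \<partial>lborel)"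
      unfolding A_def a_def h_def H_def F_def .
  qed
qed

end
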